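(* For every $\beta>0$, the origin is the unique globally asymptotically stable equilibrium of the ODE $\dot x=h(x)$ on $\mathbb R^n\times\mathbb R^n$, where $$h(x_1,x_2)=\begin{bmatrix}-Dx_1+\gamma DPM(x_2)\\ \beta Dx_1-\beta Dx_2\end{bmatrix}.$$
   Context: Finite MDP with states $\mathcal S$, actions $\mathcal A$, kernel $P$, discount $\gamma\in[0,1)$; $n=|\mathcal S||\mathcal A|$. $D$ is the diagonal matrix of a probability distribution $d$ on $\mathcal S\times\mathcal A$ with $d(s,a)>0$ for all $(s,a)$; $P$ is the $n\times|\mathcal S|$ matrix with row $(s,a)$ equal to $P(\cdot\mid s,a)$; $M(Q)(s)=\max_aQ(s,a)$. Globally asymptotically stable means Lyapunov stable and every solution converges to it. *)

theory Defs
  imports "HOL-Analysis.Analysis"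
begin

definition is_solution :: "('v::real_normed_vector \<Rightarrow> 'v) \<Rightarrow> (real \<Rightarrow> 'v) \<Rightarrow> bool" where
  "is_solution f x \<longleftrightarrow> (\<forall>t\<ge>0. (x has_vector_derivative f (x t)) (at t within {0..}))"

definition equilibrium :: "('v::real_normed_vector \<Rightarrow> 'v) \<Rightarrow> 'v \<Rightarrow> bool" where
  "equilibrium f e \<longleftrightarrow> f e = 0"

definition lyapunov_stable :: "('v::real_normed_vector \<Rightarrow> 'v) \<Rightarrow> 'v \<Rightarrow> bool" where
  "lyapunov_stable f e \<longleftrightarrow>
     (\<forall>\<epsilon>>0. \<exists>\<delta>>0. \<forall>x. is_solution f x \<and> dist (x 0) e < \<delta> \<longrightarrow> (\<forall>t\<ge>0. dist (x t) e < \<epsilon>))"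

definition globally_asymptotically_stable :: "('v::real_normed_vector \<Rightarrow> 'v) \<Rightarrow> 'v \<Rightarrow> bool" where
  "globally_asymptotically_stable f e \<longleftrightarrow>
     lyapunov_stable f e \<and> (\<forall>x. is_solution f x \<longrightarrow> (x \<longlongrightarrow> e) at_top)"

text \<open>MDP operators. Vectors in R^n, n = |S||A|, are indexed by state-action pairs.\<close>

definition Dmat :: "('s \<times> 'a \<Rightarrow> real) \<Rightarrow> real ^ ('s::finite \<times> 'a::finite) \<Rightarrow> real ^ ('s \<times> 'a)" where
  "Dmat d x = (\<chi> i. d i * x $ i)"

definition Mmax :: "real ^ ('s::finite \<times> 'a::finite) \<Rightarrow> 's \<Rightarrow> real" where
  "Mmax Q s = (MAX b\<in>(UNIV::'a set). Q $ (s, b))"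

definition Pmat :: "('s \<times> 'a \<Rightarrow> 's \<Rightarrow> real) \<Rightarrow> ('s::finite \<Rightarrow> real) \<Rightarrow> real ^ ('s \<times> 'a::finite)" where
  "Pmat P v = (\<chi> i. \<Sum>s'\<in>UNIV. P i s' * v s')"

definition hfield :: "('s \<times> 'a \<Rightarrow> real) \<Rightarrow> ('s \<times> 'a \<Rightarrow> 's \<Rightarrow> real) \<Rightarrow> real \<Rightarrow> real
    \<Rightarrow> (real ^ ('s::finite \<times> 'a::finite)) \<times> (real ^ ('s \<times> 'a))
    \<Rightarrow> (real ^ ('s \<times> 'a)) \<times> (real ^ ('s \<times> 'a))" where
  "hfield d P \<gamma> \<beta> z = (case z of (x1, x2) \<Rightarrow>
     (- Dmat d x1 + \<gamma> *\<^sub>R Dmat d (Pmat P (Mmax x2)),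
      \<beta> *\<^sub>R Dmat d x1 - \<beta> *\<^sub>R Dmat d x2))"

end

theory Submission
  imports Defs
begin

lemma real_induct_right:
  fixes P :: "real \<Rightarrow> bool"
  assumes P0: "P 0"
    and left: "\<And>T. T > 0 \<Longrightarrow> (\<forall>s. 0 \<le> s \<and> s < T \<longrightarrow> P s) \<Longrightarrow> P T"
    and right: "\<And>t. t \<ge> 0 \<Longrightarrow> P t \<Longrightarrow> eventually P (at_right t)"
    and t: "t \<ge> 0"
  shows "P t"
proof (rule ccontr)
  assume nP: "\<not> P t"
  define S where "S = {s. 0 \<le> s \<and> s \<le> t \<and> (\<forall>r. 0 \<le> r \<and> r \<le> s \<longrightarrow> P r)}"
  have 0: "0 \<in> S" using P0 t unfolding S_def by auto
  have bdd: "bdd_above S" unfolding S_def by (auto intro: bdd_aboveI[of _ t])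
  define s0 where "s0 = Sup S"
  have s0ge: "0 \<le> s0" using 0 bdd cSup_upper s0_def by blast
  have s0le: "s0 \<le> t" using 0 unfolding s0_def by (intro cSup_least) (auto simp: S_def)
  have below: "P r" if r0: "0 \<le> r" "r < s0" for r
  proof -
    obtain s where "s \<in> S" "r < s" using less_cSupD[of S r] 0 r0 s0_def by auto
    then show ?thesis using r0 unfolding S_def by auto
  qed
  have Ps0: "P s0"
  proof (cases "s0 = 0")
    case True then show ?thesis using P0 by simp
  next
    case False then show ?thesis using left[of s0] below s0ge by auto
  qed
  have "s0 \<noteq> t" using Ps0 nP by auto
  with s0le have lt: "s0 < t" by simp
  have "eventually P (at_right s0)" using right s0ge Ps0 by auto
  then obtain b where b: "b > s0" "\<And>y. s0 < y \<Longrightarrow> y < b \<Longrightarrow> P y"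
    by (metis eventually_at_right_field)
  define s1 where "s1 = s0 + min (b - s0) (t - s0) / 2"
  have "s1 \<in> S" unfolding S_def s1_def
  proof (intro CollectI conjI allI impI)
    fix r assume r: "0 \<le> r \<and> r \<le> s0 + min (b - s0) (t - s0) / 2"
    show "P r"
    proof (cases "r < s0")
      case True then show ?thesis using below r by auto
    next
      case False
      show ?thesis
      proof (cases "r = s0")
        case True then show ?thesis using Ps0 by simp
      next
        case False
        have "min (b - s0) (t - s0) \<le> b - s0" by simp
        then have "r < b" using r[THEN conjunct2] b(1) by (auto simp: min_def field_simps split: if_splits)
        moreover have "s0 < r" using \<open>\<not> r < s0\<close> False by linarith
        ultimately show ?thesis using b(2) by blast
      qed
    qed
  qed (use s0ge lt b in \<open>auto simp: min_def field_simps\<close>)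
  then have "s1 \<le> s0" unfolding s0_def using bdd cSup_upper by blast
  moreover have "s1 > s0" unfolding s1_def using lt b by (auto simp: min_def field_simps)
  ultimately show False by simp
qed
lemma deriv_neg_right:
  fixes f :: "real \<Rightarrow> real"
  assumes "(f has_real_derivative D) (at_right t)" "D < 0"
  shows "eventually (\<lambda>s. f s < f t) (at_right t)"
proof -
  have "((\<lambda>y. (f y - f t) / (y - t)) \<longlongrightarrow> D) (at_right t)"
    using assms(1) by (simp add: has_field_derivative_iff)
  then have "eventually (\<lambda>y. (f y - f t) / (y - t) < 0) (at_right t)"
    using assms(2) by (rule order_tendstoD)
  moreover have "eventually (\<lambda>y. y > t) (at_right t)" by (simp add: eventually_at_right_less)
  ultimately show ?thesis
    by eventually_elim (auto simp: divide_less_0_iff)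
qed

lemma Mmax_bound:
  fixes Q :: "real ^ ('s::finite \<times> 'a::finite)"
  assumes "\<And>i. \<bar>Q $ i\<bar> \<le> r"
  shows "\<bar>Mmax Q s\<bar> \<le> r"
proof -
  have "Mmax Q s \<in> (\<lambda>b. Q $ (s, b)) ` UNIV" unfolding Mmax_def
    by (rule Max_in) auto
  then show ?thesis using assms by auto
qed

lemma PM_bound:
  fixes Q :: "real ^ ('s::finite \<times> 'a::finite)" and P :: "'s \<times> 'a \<Rightarrow> 's \<Rightarrow> real"
  assumes "\<And>i. \<bar>Q $ i\<bar> \<le> r"
    and P_nonneg: "\<And>i s'. P i s' \<ge> 0"
    and P_sum: "\<And>i. (\<Sum>s'\<in>UNIV. P i s') = 1"
  shows "\<bar>\<Sum>s'\<in>UNIV. P i s' * Mmax Q s'\<bar> \<le> r"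
proof -
  have "\<bar>\<Sum>s'\<in>UNIV. P i s' * Mmax Q s'\<bar> \<le> (\<Sum>s'\<in>UNIV. \<bar>P i s' * Mmax Q s'\<bar>)"
    by (rule sum_abs)
  also have "\<dots> \<le> (\<Sum>s'\<in>UNIV. P i s' * r)"
  proof (rule sum_mono)
    fix s' show "\<bar>P i s' * Mmax Q s'\<bar> \<le> P i s' * r"
      using Mmax_bound[OF assms(1), of s'] P_nonneg[of i s']
      by (simp add: abs_mult mult_left_mono)
  qed
  also have "\<dots> = r" using P_sum[of i] by (simp add: sum_distrib_right[symmetric])
  finally show ?thesis .
qed

lemma hfield_fst:
  "fst (hfield d P \<gamma> \<beta> z) $ i = - (d i * fst z $ i) + \<gamma> * (d i * (\<Sum>s'\<in>UNIV. P i s' * Mmax (snd z) s'))"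
  by (cases z) (simp add: hfield_def Dmat_def Pmat_def)

lemma hfield_snd:
  "snd (hfield d P \<gamma> \<beta> z) $ i = \<beta> * (d i * fst z $ i) - \<beta> * (d i * snd z $ i)"
  by (cases z) (simp add: hfield_def Dmat_def)

lemma comp_deriv:
  assumes "(x has_vector_derivative v) F"
  shows "((\<lambda>t. fst (x t) $ i) has_real_derivative (fst v $ i)) F"
    and "((\<lambda>t. snd (x t) $ i) has_real_derivative (snd v $ i)) F"
proof -
  show "((\<lambda>t. fst (x t) $ i) has_real_derivative (fst v $ i)) F"
    unfolding has_real_derivative_iff_has_vector_derivative
    using bounded_linear.has_vector_derivative[OF bounded_linear_compose[OF bounded_linear_vec_nth bounded_linear_fst] assms]
    by simp
  show "((\<lambda>t. snd (x t) $ i) has_real_derivative (snd v $ i)) F"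
    unfolding has_real_derivative_iff_has_vector_derivative
    using bounded_linear.has_vector_derivative[OF bounded_linear_compose[OF bounded_linear_vec_nth bounded_linear_snd] assms]
    by simp
qed


lemma decay:
  fixes d :: "'s::finite \<times> 'a::finite \<Rightarrow> real"
    and P :: "'s \<times> 'a \<Rightarrow> 's \<Rightarrow> real"
    and \<gamma> \<beta> a c R :: real
    and x :: "real \<Rightarrow> (real ^ ('s \<times> 'a)) \<times> (real ^ ('s \<times> 'a))"
  assumes d_pos: "\<And>i. d i > 0"
    and P_nonneg: "\<And>i s'. P i s' \<ge> 0"
    and P_sum: "\<And>i. (\<Sum>s'\<in>UNIV. P i s') = 1"
    and gamma: "0 \<le> \<gamma>"
    and beta: "\<beta> > 0"
    and a: "0 < a" and c: "0 < c"
    and ca1: "\<And>i. c * a < d i * (a - \<gamma>)"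
    and ca2: "\<And>i. c < \<beta> * d i * (1 - a)"
    and R: "R > 0"
    and sol: "is_solution (hfield d P \<gamma> \<beta>) x"
    and init1: "\<And>i. \<bar>fst (x 0) $ i\<bar> \<le> a * R"
    and init2: "\<And>i. \<bar>snd (x 0) $ i\<bar> \<le> R"
    and t: "t \<ge> 0"
  shows "\<bar>fst (x t) $ i\<bar> \<le> a * R * exp (- c * t) \<and> \<bar>snd (x t) $ i\<bar> \<le> R * exp (- c * t)"
proof -
  define h where "h = hfield d P \<gamma> \<beta>"
  define comp :: "bool \<times> ('s \<times> 'a) \<times> bool \<Rightarrow> real \<Rightarrow> real" where
    "comp k t = (case k of (b, i, sg) \<Rightarrow> (if sg then 1 else -1) * (if b then fst (x t) $ i else snd (x t) $ i))" for k t
  define comp' :: "bool \<times> ('s \<times> 'a) \<times> bool \<Rightarrow> real \<Rightarrow> real" where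
    "comp' k t = (case k of (b, i, sg) \<Rightarrow> (if sg then 1 else -1) * (if b then fst (h (x t)) $ i else snd (h (x t)) $ i))" for k t
  define w :: "bool \<times> ('s \<times> 'a) \<times> bool \<Rightarrow> real" where
    "w k = (if fst k then a else 1)" for k
  define g where "g k t = comp k t - w k * R * exp (- c * t)" for k t
  define g' where "g' k t = comp' k t + w k * R * c * exp (- c * t)" for k t
  have xder: "(x has_vector_derivative h (x t)) (at t within {0..})" if "t \<ge> 0" for t
    using sol that unfolding is_solution_def h_def by auto
  have compder: "(comp k has_real_derivative comp' k t) (at t within {0..})" if "t \<ge> 0" for k t
  proof -
    obtain b i sg where k: "k = (b, i, sg)" by (cases k) auto
    show ?thesis using comp_deriv[OF xder[OF that], of i] unfolding k comp_def comp'_def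
      by (cases b; cases sg) (auto intro: DERIV_cmult DERIV_minus)
  qed
  have gder: "(g k has_real_derivative g' k t) (at t within {0..})" if "t \<ge> 0" for k t
    unfolding g_def[abs_def] g'_def
    by (rule derivative_eq_intros compder[OF that] refl)+ (simp add: algebra_simps)
  have gcont: "continuous (at t within {0..}) (g k)" if "t \<ge> 0" for k t
    using DERIV_continuous[OF gder[OF that]] .
  define Q where "Q t = (\<forall>k. g k t \<le> 0)" for t
  have Q_iff: "Q t \<longleftrightarrow> (\<forall>i. \<bar>fst (x t) $ i\<bar> \<le> a * R * exp (- c * t) \<and> \<bar>snd (x t) $ i\<bar> \<le> R * exp (- c * t))" for t
  proof
    assume "Q t"
    then have q: "\<And>b i sg. g (b, i, sg) t \<le> 0" unfolding Q_def by blast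
    show "\<forall>i. \<bar>fst (x t) $ i\<bar> \<le> a * R * exp (- c * t) \<and> \<bar>snd (x t) $ i\<bar> \<le> R * exp (- c * t)"
    proof
      fix i
      show "\<bar>fst (x t) $ i\<bar> \<le> a * R * exp (- c * t) \<and> \<bar>snd (x t) $ i\<bar> \<le> R * exp (- c * t)"
        using q[of True i True] q[of True i False] q[of False i True] q[of False i False]
        unfolding g_def comp_def w_def by (simp add: abs_le_iff)
    qed
  next
    assume "\<forall>i. \<bar>fst (x t) $ i\<bar> \<le> a * R * exp (- c * t) \<and> \<bar>snd (x t) $ i\<bar> \<le> R * exp (- c * t)"
    then show "Q t" unfolding Q_def g_def comp_def w_def by (auto simp: abs_le_iff split: prod.splits)
  qed
  have "Q t"
  proof (rule real_induct_right[OF _ _ _ t])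
    show "Q 0" unfolding Q_iff using init1 init2 by simp
  next
    fix T :: real assume T: "T > 0" and below: "\<forall>s. 0 \<le> s \<and> s < T \<longrightarrow> Q s"
    show "Q T" unfolding Q_def
    proof
      fix k
      have "(g k \<longlongrightarrow> g k T) (at T within {0..})"
        using gcont[of T k] T by (simp add: continuous_within)
      then have "(g k \<longlongrightarrow> g k T) (at_left T)"
        by (rule tendsto_mono[rotated]) (metis T at_le at_within_Icc_at_left atLeastAtMost_iff atLeast_iff subsetI)
      moreover have "eventually (\<lambda>s. g k s \<le> 0) (at_left T)"
        using eventually_at_left_real[OF T] by eventually_elim (use below in \<open>auto simp only: Q_def greaterThanLessThan_iff less_imp_le\<close>)
      ultimately show "g k T \<le> 0" by (rule tendsto_upperbound) simp
    qed
  next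
    fix t0 :: real assume t0: "t0 \<ge> 0" and Qt0: "Q t0"
    define r where "r = R * exp (- c * t0)"
    have r: "r > 0" using R by (simp add: r_def)
    have b1: "\<bar>fst (x t0) $ i\<bar> \<le> a * r" and b2: "\<bar>snd (x t0) $ i\<bar> \<le> r" for i
      using Qt0[unfolded Q_iff, rule_format, of i] unfolding r_def by (simp_all add: mult.assoc)
    have sub: "{t0<..} \<subseteq> {0..}" using t0 by auto
    have "eventually (\<lambda>s. g k s \<le> 0) (at_right t0)" for k
    proof (cases "g k t0 < 0")
      case True
      have "(g k \<longlongrightarrow> g k t0) (at t0 within {0..})"
        using gcont[OF t0, of k] by (simp add: continuous_within)
      then have "(g k \<longlongrightarrow> g k t0) (at_right t0)"
        by (rule tendsto_mono[rotated]) (rule at_le[OF sub])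
      from order_tendstoD(2)[OF this True] show ?thesis by eventually_elim simp
    next
      case False
      then have g0: "g k t0 = 0" using Qt0 unfolding Q_def by (meson not_le order_antisym_conv)
      obtain b i sg where k: "k = (b, i, sg)" by (cases k) auto
      define sgn :: real where "sgn = (if sg then 1 else -1)"
      have sgn: "\<bar>sgn\<bar> = 1" by (simp add: sgn_def)
      have PMb: "\<bar>\<Sum>s'\<in>UNIV. P i s' * Mmax (snd (x t0)) s'\<bar> \<le> r"
        by (rule PM_bound[OF b2 P_nonneg P_sum])
      have neg: "g' k t0 < 0"
      proof (cases b)
        case True
        have e: "sgn * fst (x t0) $ i = a * r" using g0 True unfolding g_def k comp_def w_def sgn_def r_def
          by (auto simp: algebra_simps)
        have "sgn * (\<Sum>s'\<in>UNIV. P i s' * Mmax (snd (x t0)) s') \<le> r"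
          using PMb sgn by (metis abs_le_D1 abs_mult mult_1)
        then have "\<gamma> * d i * (sgn * (\<Sum>s'\<in>UNIV. P i s' * Mmax (snd (x t0)) s')) \<le> \<gamma> * d i * r"
          using gamma d_pos[of i] by (intro mult_left_mono) auto
        moreover have "c * a * r < d i * (a - \<gamma>) * r" using ca1[of i] r by simp
        moreover have "g' k t0 = - d i * (sgn * fst (x t0) $ i) + \<gamma> * d i * (sgn * (\<Sum>s'\<in>UNIV. P i s' * Mmax (snd (x t0)) s')) + c * a * r"
          using True unfolding g'_def k comp'_def w_def sgn_def r_def h_def hfield_fst
          by (auto simp: algebra_simps)
        ultimately show ?thesis unfolding e by (simp add: algebra_simps)
      next
        case False
        have e: "sgn * snd (x t0) $ i = r" using g0 False unfolding g_def k comp_def w_def sgn_def r_def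
          by (auto simp: algebra_simps)
        have "sgn * fst (x t0) $ i \<le> a * r"
          using b1[of i] sgn by (metis abs_le_D1 abs_mult mult_1)
        then have "\<beta> * d i * (sgn * fst (x t0) $ i) \<le> \<beta> * d i * (a * r)"
          using beta d_pos[of i] by (intro mult_left_mono) auto
        moreover have "c * r < \<beta> * d i * (1 - a) * r" using ca2[of i] r by simp
        moreover have "g' k t0 = \<beta> * d i * (sgn * fst (x t0) $ i) - \<beta> * d i * (sgn * snd (x t0) $ i) + c * r"
          using False unfolding g'_def k comp'_def w_def sgn_def r_def h_def hfield_snd
          by (auto simp: algebra_simps)
        ultimately show ?thesis unfolding e by (simp add: algebra_simps)
      qed
      have "(g k has_real_derivative g' k t0) (at_right t0)"
        using DERIV_subset[OF gder[OF t0] sub] .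
      from deriv_neg_right[OF this neg] show ?thesis unfolding g0 by eventually_elim simp
    qed
    then have "eventually (\<lambda>s. \<forall>k. g k s \<le> 0) (at_right t0)"
      by (rule eventually_all_finite)
    then show "eventually Q (at_right t0)" unfolding Q_def .
  qed
  then show ?thesis unfolding Q_iff by blast
qed


lemma norm_bound:
  fixes z :: "(real ^ 'n::finite) \<times> (real ^ 'n)"
  assumes "\<And>i. \<bar>fst z $ i\<bar> \<le> B" "\<And>i. \<bar>snd z $ i\<bar> \<le> B"
  shows "norm z \<le> 2 * real CARD('n) * B"
proof -
  have "norm z \<le> norm (fst z) + norm (snd z)"
    using norm_Pair_le[of "fst z" "snd z"] by simp
  also have "\<dots> \<le> (\<Sum>i\<in>UNIV. \<bar>fst z $ i\<bar>) + (\<Sum>i\<in>UNIV. \<bar>snd z $ i\<bar>)"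
    by (intro add_mono norm_le_l1_cart)
  also have "\<dots> \<le> (\<Sum>i\<in>(UNIV::'n set). B) + (\<Sum>i\<in>(UNIV::'n set). B)"
    by (intro add_mono sum_mono assms)
  also have "\<dots> = 2 * real CARD('n) * B" by simp
  finally show ?thesis .
qed

lemma Mmax_zero: "Mmax 0 s = 0"
  by (simp add: Mmax_def)

lemma hfield_zero: "hfield d P \<gamma> \<beta> 0 = 0"
  by (simp add: hfield_def Dmat_def Pmat_def vec_eq_iff zero_prod_def Mmax_zero)

theorem mainTheorem10:
  fixes d :: "'s::finite \<times> 'a::finite \<Rightarrow> real"
    and P :: "'s \<times> 'a \<Rightarrow> 's \<Rightarrow> real"
    and \<gamma> \<beta> :: real
  assumes d_pos: "\<And>i. d i > 0"
    and d_sum: "(\<Sum>i\<in>UNIV. d i) = 1"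
    and P_nonneg: "\<And>i s'. P i s' \<ge> 0"
    and P_sum: "\<And>i. (\<Sum>s'\<in>UNIV. P i s') = 1"
    and gamma: "0 \<le> \<gamma>" "\<gamma> < 1"
    and beta: "\<beta> > 0"
  shows "\<forall>e. (equilibrium (hfield d P \<gamma> \<beta>) e \<and> globally_asymptotically_stable (hfield d P \<gamma> \<beta>) e)
              \<longleftrightarrow> e = 0"
proof -
  define h where "h = hfield d P \<gamma> \<beta>"
  define dm where "dm = Min (range d)"
  have dm: "dm > 0" unfolding dm_def using d_pos by (subst Min_gr_iff) auto
  have dmle: "dm \<le> d i" for i unfolding dm_def by (rule Min_le) auto
  define a where "a = (1 + \<gamma>) / 2"
  define c where "c = dm * (1 - \<gamma>) / 4 * min 1 \<beta>"
  have a0: "0 < a" and a1: "a \<le> 1" using gamma unfolding a_def by auto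
  have c0: "0 < c" unfolding c_def using dm gamma beta by auto
  have cle1: "c \<le> dm * (1 - \<gamma>) / 4" unfolding c_def using dm gamma
    by (intro mult_left_le) auto
  have cle2: "c \<le> dm * (1 - \<gamma>) / 4 * \<beta>" unfolding c_def using dm gamma
    by (intro mult_left_mono) auto
  have dg: "dm * (1 - \<gamma>) > 0" using dm gamma by simp
  have ca1: "c * a < d i * (a - \<gamma>)" for i
  proof -
    have "c * a \<le> c" using c0 a1 by (simp add: mult_left_le)
    also have "\<dots> < dm * (1 - \<gamma>) / 2" using cle1 dg by simp
    also have "\<dots> \<le> d i * (1 - \<gamma>) / 2" using dmle[of i] gamma by (simp add: mult_right_mono)
    also have "\<dots> = d i * (a - \<gamma>)" unfolding a_def by (simp add: field_simps)
    finally show ?thesis .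
  qed
  have ca2: "c < \<beta> * d i * (1 - a)" for i
  proof -
    have "c < dm * (1 - \<gamma>) / 2 * \<beta>" using cle2 mult_pos_pos[OF dg beta] by simp
    also have "\<dots> \<le> d i * (1 - \<gamma>) / 2 * \<beta>" using dmle[of i] gamma beta
      by (intro mult_right_mono) (auto simp: mult_right_mono)
    also have "\<dots> = \<beta> * d i * (1 - a)" unfolding a_def by (simp add: field_simps)
    finally show ?thesis .
  qed
  define N where "N = real CARD('s \<times> 'a)"
  have N: "N > 0" unfolding N_def by simp
  have bound: "norm (x t) \<le> 2 * N * (R * exp (- c * t))"
    if sol: "is_solution h x" and R: "R > 0" and i1: "\<And>i. \<bar>fst (x 0) $ i\<bar> \<le> a * R"
      and i2: "\<And>i. \<bar>snd (x 0) $ i\<bar> \<le> R" and t: "t \<ge> 0" for x R t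
  proof -
    note dec = decay[OF d_pos P_nonneg P_sum gamma(1) beta a0 c0 ca1 ca2 R sol[unfolded h_def] i1 i2 t]
    show ?thesis unfolding N_def
    proof (rule norm_bound)
      fix i
      have "a * R * exp (- c * t) \<le> R * exp (- c * t)" using a1 R by simp
      then show "\<bar>fst (x t) $ i\<bar> \<le> R * exp (- c * t)" using dec[of i] by linarith
      show "\<bar>snd (x t) $ i\<bar> \<le> R * exp (- c * t)" using dec[of i] by simp
    qed
  qed
  have comp0: "\<bar>fst z $ i\<bar> \<le> norm z" "\<bar>snd z $ i\<bar> \<le> norm z"
    for z :: "(real ^ ('s \<times> 'a)) \<times> (real ^ ('s \<times> 'a))" and i
  proof -
    have "norm (fst z) \<le> norm z" "norm (snd z) \<le> norm z"
      using norm_fst_le[where x="fst z" and y="snd z"] norm_snd_le[where x="fst z" and y="snd z"] by simp_all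
    then show "\<bar>fst z $ i\<bar> \<le> norm z" "\<bar>snd z $ i\<bar> \<le> norm z"
      using component_le_norm_cart[of "fst z" i] component_le_norm_cart[of "snd z" i] by linarith+
  qed
  have stable: "lyapunov_stable h 0"
    unfolding lyapunov_stable_def
  proof (intro allI impI)
    fix \<epsilon> :: real assume eps: "\<epsilon> > 0"
    define \<delta> where "\<delta> = \<epsilon> * a / (4 * N)"
    have \<delta>: "\<delta> > 0" unfolding \<delta>_def using eps a0 N by simp
    show "\<exists>\<delta>>0. \<forall>x. is_solution h x \<and> dist (x 0) 0 < \<delta> \<longrightarrow> (\<forall>t\<ge>0. dist (x t) 0 < \<epsilon>)"
    proof (intro exI[of _ \<delta>] conjI allI impI \<delta>)
      fix x :: "real \<Rightarrow> _" and t :: real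
      assume asm: "is_solution h x \<and> dist (x 0) 0 < \<delta>" and t: "t \<ge> 0"
      define R where "R = \<delta> / a"
      have R: "R > 0" unfolding R_def using \<delta> a0 by simp
      have aR: "a * R = \<delta>" unfolding R_def using a0 by simp
      have RR: "\<delta> \<le> R" unfolding R_def using \<delta> a0 a1 by (simp add: field_simps mult_left_le)
      have n0: "norm (x 0) < \<delta>" using asm by simp
      have "norm (x t) \<le> 2 * N * (R * exp (- c * t))"
      proof (rule bound[OF asm[THEN conjunct1] R _ _ t])
        fix i
        show "\<bar>fst (x 0) $ i\<bar> \<le> a * R" using comp0(1)[of "x 0" i] n0 aR by linarith
        show "\<bar>snd (x 0) $ i\<bar> \<le> R" using comp0(2)[of "x 0" i] n0 RR by linarith
      qed
      also have "\<dots> \<le> 2 * N * R"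
        using N R c0 t by (simp add: mult_left_le)
      also have "\<dots> = \<epsilon> / 2" unfolding R_def \<delta>_def using a0 N by (simp add: field_simps)
      also have "\<dots> < \<epsilon>" using eps by simp
      finally show "dist (x t) 0 < \<epsilon>" by simp
    qed
  qed
  have conv: "(x \<longlongrightarrow> 0) at_top" if sol: "is_solution h x" for x
  proof -
    define R where "R = (norm (x 0) + 1) / a"
    have R: "R > 0" unfolding R_def using a0 by (simp add: add_nonneg_pos)
    have aR: "a * R = norm (x 0) + 1" unfolding R_def using a0 by simp
    have RR: "norm (x 0) + 1 \<le> R" unfolding R_def using a0 a1
      by (simp add: field_simps) (metis add_mono mult_left_le_one_le norm_ge_zero less_imp_le)
    have ev: "eventually (\<lambda>t. norm (x t) \<le> 2 * N * R * exp (- c * t)) at_top"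
      using eventually_ge_at_top[of 0]
    proof eventually_elim
      case (elim t)
      have "norm (x t) \<le> 2 * N * (R * exp (- c * t))"
      proof (rule bound[OF sol R _ _ elim])
        fix i
        show "\<bar>fst (x 0) $ i\<bar> \<le> a * R" using comp0(1)[of "x 0" i] aR by linarith
        show "\<bar>snd (x 0) $ i\<bar> \<le> R" using comp0(2)[of "x 0" i] RR by linarith
      qed
      then show ?case by (simp add: mult.assoc)
    qed
    have "((\<lambda>t. 2 * N * R * exp (- c * t)) \<longlongrightarrow> 0) at_top"
      using c0 by (intro tendsto_mult_right_zero filterlim_compose[OF exp_at_bot] filterlim_tendsto_neg_mult_at_bot tendsto_const filterlim_ident) auto
    with ev show ?thesis by (rule Lim_null_comparison)
  qed
  have gas0: "globally_asymptotically_stable h 0"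
    unfolding globally_asymptotically_stable_def using stable conv by blast
  have eq0: "equilibrium h 0" unfolding equilibrium_def h_def by (rule hfield_zero)
  have const_sol: "is_solution h (\<lambda>_. 0)"
    unfolding is_solution_def using eq0[unfolded equilibrium_def] by simp
  show ?thesis unfolding h_def[symmetric]
  proof (intro allI iffI)
    fix e assume "equilibrium h e \<and> globally_asymptotically_stable h e"
    then have "((\<lambda>_::real. 0) \<longlongrightarrow> e) at_top" using const_sol
      unfolding globally_asymptotically_stable_def by blast
    then show "e = 0" using tendsto_const tendsto_unique trivial_limit_at_top_linorder by metis
  next
    fix e :: "(real ^ ('s \<times> 'a)) \<times> (real ^ ('s \<times> 'a))" assume "e = 0"
    then show "equilibrium h e \<and> globally_asymptotically_stable h e" using eq0 gas0 by simp
  qed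
qed

end
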